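(* Let $R$ be a ring with identity and an involution $*$, and let $a\in R$. Then: (i) $a$ is left $(a^*,1)$-invertible if and only if $a$ has a $\{1,4\}$-inverse; (ii) $a$ is right $(1,a^* )$-invertible if and only if $a$ has a $\{1,3\}$-inverse; (iii) $a$ is Moore–Penrose invertible if and only if $a$ is left $(a^*,1)$-invertible and right $(1,a^* )$-invertible.
   Context: An involution is a map $*:R\to R$ with $(x^* )^*=x$, $(xy)^*=y^*x^*$, $(x+y)^*=x^*+y^*$. For $x\in R$: $xR=\{xr:r\in R\}$, $Rx=\{rx:r\in R\}$. For $a,b,c\in R$, $a$ is left $(b,c)$-invertible if there is $y$ with $Ry\subseteq Rc$ and $yab=b$; right $(b,c)$-invertible if there is $y$ with $yR\subseteq bR$ and $cay=c$. A $\{1,3\}$-inverse of $a$ is $y$ with $aya=a$ and $(ay)^*=ay$; a $\{1,4\}$-inverse is $y$ with $aya=a$ and $(ya)^*=ya$; $a$ is Moore–Penrose invertible if there is $y$ with $aya=a$, $yay=y$, $(ay)^*=ay$, $(ya)^*=ya$. *)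

theory Defs
  imports Main
begin

definition is_involution :: "('a::ring_1 \<Rightarrow> 'a) \<Rightarrow> bool" where
  "is_involution s \<longleftrightarrow>
     (\<forall>x. s (s x) = x) \<and> (\<forall>x y. s (x * y) = s y * s x) \<and>
     (\<forall>x y. s (x + y) = s x + s y)"

definition left_ideal :: "'a::ring_1 \<Rightarrow> 'a set" where
  "left_ideal x = {r * x | r. True}"

definition right_ideal :: "'a::ring_1 \<Rightarrow> 'a set" where
  "right_ideal x = {x * r | r. True}"

definition left_bc_invertible :: "'a::ring_1 \<Rightarrow> 'a \<Rightarrow> 'a \<Rightarrow> bool" where
  "left_bc_invertible a b c \<longleftrightarrow>
     (\<exists>y. left_ideal y \<subseteq> left_ideal c \<and> y * a * b = b)"

definition right_bc_invertible :: "'a::ring_1 \<Rightarrow> 'a \<Rightarrow> 'a \<Rightarrow> bool" where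
  "right_bc_invertible a b c \<longleftrightarrow>
     (\<exists>y. right_ideal y \<subseteq> right_ideal b \<and> c * a * y = c)"

definition has_inv13 :: "('a::ring_1 \<Rightarrow> 'a) \<Rightarrow> 'a \<Rightarrow> bool" where
  "has_inv13 s a \<longleftrightarrow> (\<exists>y. a * y * a = a \<and> s (a * y) = a * y)"

definition has_inv14 :: "('a::ring_1 \<Rightarrow> 'a) \<Rightarrow> 'a \<Rightarrow> bool" where
  "has_inv14 s a \<longleftrightarrow> (\<exists>y. a * y * a = a \<and> s (y * a) = y * a)"

definition mp_invertible :: "('a::ring_1 \<Rightarrow> 'a) \<Rightarrow> 'a \<Rightarrow> bool" where
  "mp_invertible s a \<longleftrightarrow>
     (\<exists>y. a * y * a = a \<and> y * a * y = y \<and> s (a * y) = a * y \<and> s (y * a) = y * a)"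

end

theory Submission
  imports Defs
begin

lemma li1: "left_ideal (y::'a::ring_1) \<subseteq> left_ideal 1"
  unfolding left_ideal_def by auto

lemma ri1: "right_ideal (y::'a::ring_1) \<subseteq> right_ideal 1"
  unfolding right_ideal_def by auto

theorem proposition2p17:
  fixes star :: "'a::ring_1 \<Rightarrow> 'a" and a :: 'a
  assumes "is_involution star"
  shows "(left_bc_invertible a (star a) 1 \<longleftrightarrow> has_inv14 star a)
    \<and> (right_bc_invertible a 1 (star a) \<longleftrightarrow> has_inv13 star a)
    \<and> (mp_invertible star a \<longleftrightarrow>
         left_bc_invertible a (star a) 1 \<and> right_bc_invertible a 1 (star a))"
proof -
  have ss: "\<And>x. star (star x) = x" and sm: "\<And>x y. star (x * y) = star y * star x"
    using assms unfolding is_involution_def by auto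
  have L: "left_bc_invertible a (star a) 1 \<longleftrightarrow> (\<exists>y. y * a * star a = star a)"
    unfolding left_bc_invertible_def using li1 by auto
  have R: "right_bc_invertible a 1 (star a) \<longleftrightarrow> (\<exists>y. star a * a * y = star a)"
    unfolding right_bc_invertible_def using ri1 by auto
  have k14: "y * a * star a = star a \<longleftrightarrow> a * y * a = a \<and> star (y * a) = y * a" for y
  proof
    assume h: "y * a * star a = star a"
    have "star (y * a) = y * a * star a * star y" using h by (simp add: sm)
    also have "\<dots> = y * a * star (y * a)" by (simp add: sm mult.assoc)
    finally have e: "star (y * a) = y * a * star (y * a)" .
    have "y * a = star (y * a * star (y * a))" using e ss by metis
    also have "\<dots> = y * a * star (y * a)" using ss sm by metis
    finally have h2: "y * a = star (y*a)" using e by simp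
    have "star (a * y * a) = star (y * a) * star a" by (simp add: sm mult.assoc)
    also have "\<dots> = star a" using h h2 by simp
    finally have "star (star (a * y * a)) = star (star a)" by simp
    thus "a * y * a = a \<and> star (y * a) = y * a" using h2 ss by simp
  next
    assume h: "a * y * a = a \<and> star (y * a) = y * a"
    have "star a = star (a * (y * a))" using h by (simp add: mult.assoc)
    also have "\<dots> = y * a * star a" using h by (simp add: sm)
    finally show "y * a * star a = star a" by simp
  qed
  have k13: "star a * a * y = star a \<longleftrightarrow> a * y * a = a \<and> star (a * y) = a * y" for y
  proof
    assume h: "star a * a * y = star a"
    have "star (a * y) = star y * (star a * a * y)" using h by (simp add: sm)
    also have "\<dots> = star (a * y) * (a * y)" by (simp add: sm mult.assoc)
    finally have e: "star (a * y) = star (a * y) * (a * y)" .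
    have "a * y = star (star (a * y) * (a * y))" using e ss by metis
    also have "\<dots> = star (a * y) * (a * y)" using ss sm by metis
    finally have h2: "a * y = star (a*y)" using e by simp
    have "star (a * y * a) = star a * star (a * y)" by (simp add: sm)
    also have "\<dots> = star a" using h h2 by (simp add: mult.assoc)
    finally have "star (star (a * y * a)) = star (star a)" by simp
    thus "a * y * a = a \<and> star (a * y) = a * y" using h2 ss by simp
  next
    assume h: "a * y * a = a \<and> star (a * y) = a * y"
    have "star a = star (a * y * a)" using h by simp
    also have "\<dots> = star a * star (a * y)" by (simp add: sm)
    also have "\<dots> = star a * a * y" using h by (simp add: mult.assoc)
    finally show "star a * a * y = star a" by simp
  qed
  have i1: "left_bc_invertible a (star a) 1 \<longleftrightarrow> has_inv14 star a"
    unfolding L has_inv14_def using k14 by auto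
  have i2: "right_bc_invertible a 1 (star a) \<longleftrightarrow> has_inv13 star a"
    unfolding R has_inv13_def using k13 by auto
  have i3: "mp_invertible star a \<longleftrightarrow> has_inv14 star a \<and> has_inv13 star a"
  proof
    assume "mp_invertible star a"
    thus "has_inv14 star a \<and> has_inv13 star a"
      unfolding mp_invertible_def has_inv14_def has_inv13_def by blast
  next
    assume "has_inv14 star a \<and> has_inv13 star a"
    then obtain y1 y2 where a1: "a * y1 * a = a" "star (y1 * a) = y1 * a"
      and a2: "a * y2 * a = a" "star (a * y2) = a * y2"
      unfolding has_inv14_def has_inv13_def by blast
    define z where "z = y1 * a * y2"
    have e1: "a * z = a * y2" using a1 unfolding z_def by (metis mult.assoc)
    have e2: "z * a = y1 * a" using a2 unfolding z_def by (metis mult.assoc)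
    have "a * z * a = a" using e1 a2 by simp
    moreover have "z * a * z = z" using e2 unfolding z_def by (metis a1(1) mult.assoc)
    ultimately show "mp_invertible star a" unfolding mp_invertible_def
      using e1 e2 a1 a2 by metis
  qed
  show ?thesis using i1 i2 i3 by blast
qed

end
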